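(* Let $\Gamma=\mathbb{Z}/2\times\mathbb{Z}$, let $S$ be a finite symmetric multiset of elements of $\Gamma$ not containing the identity and generating $\Gamma$, and let $a:\Gamma\curvearrowright X$ be a free Borel action on a standard Borel space $X$. If $(1,0)\in S$, then $\chi_B'(G(a,S))=|S|$.
   Context: $G(a,S)$ is the multigraph on $X$ with, for each $x$ and each occurrence of $\gamma$ in $S$, an edge between $x$ and $\gamma\cdot x$ (the occurrence of $\gamma$ at $x$ and the corresponding occurrence of $\gamma^{-1}$ at $\gamma\cdot x$ giving the same edge, so each vertex has degree $|S|$). $\chi_B'$ is the least number of colors in a Borel edge coloring, where distinct edges sharing a vertex receive distinct colors. *)

theory Defs
  imports "HOL-Analysis.Analysis" "HOL-Library.Multiset" "HOL-Library.Extended_Nat"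
begin

text \<open>The group Gamma = Z/2 x Z, with Z/2 represented by bool (False = 0, True = 1).\<close>
type_synonym gam = "bool \<times> int"

definition gmul :: "gam \<Rightarrow> gam \<Rightarrow> gam" where
  "gmul g h = ((fst g \<noteq> fst h), snd g + snd h)"

definition gone :: gam where
  "gone = (False, 0)"

definition ginv :: "gam \<Rightarrow> gam" where
  "ginv g = (fst g, - snd g)"

inductive_set gen_subgroup :: "gam set \<Rightarrow> gam set" for A where
  gen_one: "gone \<in> gen_subgroup A"
| gen_base: "g \<in> A \<Longrightarrow> g \<in> gen_subgroup A"
| gen_inv: "g \<in> gen_subgroup A \<Longrightarrow> ginv g \<in> gen_subgroup A"
| gen_mul: "g \<in> gen_subgroup A \<Longrightarrow> h \<in> gen_subgroup A \<Longrightarrow> gmul g h \<in> gen_subgroup A"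

definition symmetric_mset :: "gam multiset \<Rightarrow> bool" where
  "symmetric_mset S \<longleftrightarrow> (\<forall>g. count S g = count S (ginv g))"

text \<open>A (left) action of Gamma on X, Borel (each group element acts by a Borel map)
  and free. X is a standard Borel space, modelled as a Polish space with its Borel sets.\<close>
definition borel_action :: "(gam \<Rightarrow> 'x::polish_space \<Rightarrow> 'x) \<Rightarrow> bool" where
  "borel_action a \<longleftrightarrow>
     (\<forall>x. a gone x = x) \<and>
     (\<forall>g h x. a (gmul g h) x = a g (a h x)) \<and>
     (\<forall>g. a g \<in> borel_measurable borel)"

definition free_action :: "(gam \<Rightarrow> 'x \<Rightarrow> 'x) \<Rightarrow> bool" where
  "free_action a \<longleftrightarrow> (\<forall>g x. a g x = x \<longrightarrow> g = gone)"

text \<open>Half-edges of G(a,S) at a vertex x: occurrences (g,i) of g in S, i < count S g.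
  The half-edge (x,g,i) and the half-edge (a g x, ginv g, i) form the same edge.
  An edge colouring c with k colours assigns to each half-edge a colour < k, agrees on
  the two half-edges of each edge, and gives distinct colours to distinct half-edges at
  the same vertex (distinct edges at a vertex, by freeness).\<close>
definition borel_edge_coloring ::
    "(gam \<Rightarrow> 'x::polish_space \<Rightarrow> 'x) \<Rightarrow> gam multiset \<Rightarrow> nat \<Rightarrow> ('x \<Rightarrow> gam \<Rightarrow> nat \<Rightarrow> nat) \<Rightarrow> bool" where
  "borel_edge_coloring a S k c \<longleftrightarrow>
     (\<forall>x g i. i < count S g \<longrightarrow> c x g i < k) \<and>
     (\<forall>x g i. i < count S g \<longrightarrow> c (a g x) (ginv g) i = c x g i) \<and>
     (\<forall>x g i h j. i < count S g \<longrightarrow> j < count S h \<longrightarrow> (g, i) \<noteq> (h, j) \<longrightarrow> c x g i \<noteq> c x h j) \<and>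
     (\<forall>g i. i < count S g \<longrightarrow> (\<lambda>x. c x g i) \<in> measurable borel (count_space UNIV))"

text \<open>Borel chromatic index chi_B'(G(a,S)); infinity if no finite Borel edge colouring exists.\<close>
definition borel_chromatic_index :: "(gam \<Rightarrow> 'x::polish_space \<Rightarrow> 'x) \<Rightarrow> gam multiset \<Rightarrow> enat" where
  "borel_chromatic_index a S = (INF k \<in> {k::nat. \<exists>c. borel_edge_coloring a S k c}. enat k)"

end

theory Submission
  imports Defs
begin

lemma gmul_pair[simp]: "gmul (s,z) (s',z') = (s \<noteq> s', z + z')" by (simp add: gmul_def)
lemma ginv_pair[simp]: "ginv (s,z) = (s, -z)" by (simp add: ginv_def)
lemma gmul_comm: "gmul g h = gmul h g" by (auto simp: gmul_def)

definition gp :: "gam \<Rightarrow> int \<Rightarrow> gam" where "gp g k = (fst g \<and> odd k, k * snd g)"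

lemma size_HS: "card {(h,j). j < count S h} = size (S::'a multiset)"
proof -
  have "{(h,j). j < count S h} = Sigma (set_mset S) (\<lambda>h. {..<count S h})"
    using count_greater_zero_iff by fastforce
  hence "card {(h,j). j < count S h} = (\<Sum>h\<in>set_mset S. count S h)"
    by (simp add: card_SigmaI)
  thus ?thesis by (simp add: size_multiset_overloaded_eq)
qed

locale L =
  fixes S :: "gam multiset" and a :: "gam \<Rightarrow> 'x::polish_space \<Rightarrow> 'x"
  assumes symS: "symmetric_mset S" and nog: "gone \<notin># S"
    and act: "borel_action a" and fr: "free_action a" and tin: "(True,0) \<in># S"
begin

lemma a_one: "a (False,0) x = x" using act by (simp add: borel_action_def gone_def)
lemma a_mul: "a (gmul g h) x = a g (a h x)" using act unfolding borel_action_def by blast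
lemma a_meas[measurable]: "a g \<in> borel_measurable borel" using act unfolding borel_action_def by blast
lemma a_pre: "A \<in> sets borel \<Longrightarrow> a g -` A \<in> sets borel"
  using measurable_sets[OF a_meas, of A g] by simp
lemma a_comp: "a (s,z) (a (s',z') x) = a (s \<noteq> s', z + z') x"
  using a_mul[of "(s,z)" "(s',z')" x] by simp
lemma a_comm: "a g (a h x) = a h (a g x)"
  by (metis a_mul gmul_comm)
lemma a_inv: "a (ginv g) (a g x) = x"
  by (cases g) (simp add: a_comp a_one)
lemma a_free: "a (s,z) x = x \<Longrightarrow> z = 0"
  using fr by (auto simp: free_action_def gone_def)

abbreviation t :: gam where "t \<equiv> (True, 0)"

definition HS where "HS = {(h,j). j < count S h}"
definition P where "P = {(g,i). snd g > 0 \<and> i < count S g}"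
definition kP where "kP = card P"
definition mt where "mt = count S t"
definition idx where "idx = (SOME f. bij_betw f P {0..<card P})"
definition npos :: "gam \<times> nat \<Rightarrow> int" where "npos p = snd (fst p)"
definition base where "base p = (\<Sum>q\<in>{q\<in>P. idx q < idx p}. 2 * npos q)"
definition W where "W = (\<Sum>q\<in>P. 2 * npos q) + 1"
definition F where "F = {h::gam. 0 < \<bar>snd h\<bar> \<and> \<bar>snd h\<bar> < W}"
definition Bas where "Bas = (SOME B::'x set set. countable B \<and> topological_basis B)"
definition B where "B n = from_nat_into Bas n"
definition kap where "kap x = (LEAST n. x \<in> B n \<and> (\<forall>h\<in>F. a h x \<notin> B n))"
primrec J where "J 0 = {}" | "J (Suc n) = J n \<union> {x. kap x = n \<and> (\<forall>h\<in>F. a h x \<notin> J n)}"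
definition I where "I = (\<Union>n. J n)"
definition M where "M = I \<union> {y. a t y \<in> I}"

lemma finF: "finite F"
proof -
  have "F \<subseteq> UNIV \<times> {-W..W}" by (auto simp: F_def)
  thus ?thesis by (rule finite_subset) auto
qed

lemma F_inv: "h \<in> F \<Longrightarrow> ginv h \<in> F" by (cases h) (auto simp: F_def)

lemma Bas: "countable Bas \<and> topological_basis Bas"
  unfolding Bas_def by (rule someI_ex[OF ex_countable_basis])

lemma Bas_ne: "Bas \<noteq> {}"
proof -
  obtain V where "V \<in> Bas" "undefined \<in> V" "V \<subseteq> UNIV"
    by (rule topological_basisE[OF conjunct2[OF Bas] open_UNIV UNIV_I])
  thus ?thesis by auto
qed

lemma B_open: "open (B n)"
  using topological_basis_open[OF conjunct2[OF Bas] from_nat_into[OF Bas_ne]] by (simp add: B_def)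

lemma B_sep: "open U \<Longrightarrow> x \<in> U \<Longrightarrow> \<exists>n. x \<in> B n \<and> B n \<subseteq> U"
proof -
  assume "open U" "x \<in> U"
  then obtain V where V: "V \<in> Bas" "x \<in> V" "V \<subseteq> U" using topological_basisE[OF conjunct2[OF Bas]] by metis
  have "V \<in> range B" using V(1) range_from_nat_into[OF Bas_ne] Bas by (simp add: B_def[abs_def])
  thus ?thesis using V by auto
qed

lemma kap_ex: "\<exists>n. x \<in> B n \<and> (\<forall>h\<in>F. a h x \<notin> B n)"
proof -
  let ?U = "UNIV - (\<lambda>h. a h x) ` F"
  have "closed ((\<lambda>h. a h x) ` F)" by (rule finite_imp_closed) (simp add: finF)
  hence "open ?U" by (simp add: open_Diff)
  moreover have "x \<notin> (\<lambda>h. a h x) ` F"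
  proof
    assume "x \<in> (\<lambda>h. a h x) ` F"
    then obtain h where "h \<in> F" "a h x = x" by auto
    thus False using a_free[of "fst h" "snd h" x] by (simp add: F_def)
  qed
  hence "x \<in> ?U" by simp
  ultimately obtain n where "x \<in> B n" "B n \<subseteq> ?U" using B_sep by blast
  thus ?thesis by auto
qed

lemma kap_prop: "x \<in> B (kap x) \<and> (\<forall>h\<in>F. a h x \<notin> B (kap x))"
  unfolding kap_def by (rule LeastI_ex[OF kap_ex])

lemma kap_ne: "h \<in> F \<Longrightarrow> kap (a h x) \<noteq> kap x"
  using kap_prop[of x] kap_prop[of "a h x"] F_inv[of h] a_inv[of h x] by metis

lemma J_mono: "m \<le> n \<Longrightarrow> J m \<subseteq> J n"
  by (induction n) (auto simp: le_Suc_eq)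

lemma J_char: "x \<in> J n \<Longrightarrow> x \<in> J (Suc (kap x)) \<and> (\<forall>h\<in>F. a h x \<notin> J (kap x))"
  by (induction n) auto

lemma I_indep: "x \<in> I \<Longrightarrow> a h x \<in> I \<Longrightarrow> h \<in> F \<Longrightarrow> False"
proof -
  assume "x \<in> I" "a h x \<in> I" and hF: "h \<in> F"
  then obtain n1 n2 where "x \<in> J n1" "a h x \<in> J n2" by (auto simp: I_def)
  then have 1: "x \<in> J (Suc (kap x))" "\<forall>h\<in>F. a h x \<notin> J (kap x)"
    and 2: "a h x \<in> J (Suc (kap (a h x)))" "\<forall>h'\<in>F. a h' (a h x) \<notin> J (kap (a h x))"
    using J_char by blast+
  have ne: "kap (a h x) \<noteq> kap x" using kap_ne hF .
  show False
  proof (cases "kap x < kap (a h x)")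
    case True
    then have "x \<in> J (kap (a h x))" using 1(1) J_mono[of "Suc (kap x)" "kap (a h x)"] by auto
    thus False using 2(2) F_inv[OF hF] a_inv[of h x] by metis
  next
    case False
    then have "kap (a h x) < kap x" using ne by simp
    then have "a h x \<in> J (kap x)" using 2(1) J_mono[of "Suc (kap (a h x))" "kap x"] by auto
    thus False using 1(2) hF by blast
  qed
qed

lemma I_max: "x \<in> I \<or> (\<exists>h\<in>F. a h x \<in> I)"
proof (cases "x \<in> J (Suc (kap x))")
  case True thus ?thesis unfolding I_def by blast
next
  case False
  hence "\<not> (\<forall>h\<in>F. a h x \<notin> J (kap x))" by simp
  then obtain h where "h \<in> F" "a h x \<in> J (kap x)" by blast
  thus ?thesis unfolding I_def by blast
qed

lemma Least_level:
  assumes "\<And>d. {x. Q d x} \<in> sets borel" "\<And>x. \<exists>d. Q d x"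
  shows "{x. (LEAST d::nat. Q d x) = n} \<in> sets borel"
proof -
  have "{x. (LEAST d::nat. Q d x) = n} = {x. Q n x} \<inter> (UNIV - (\<Union>d\<in>{..<n}. {x. Q d x}))"
  proof (intro set_eqI iffI)
    fix x assume "x \<in> {x. (LEAST d::nat. Q d x) = n}"
    hence e: "(LEAST d::nat. Q d x) = n" by simp
    have 1: "Q n x" using LeastI_ex[OF assms(2)[of x]] e by simp
    have 2: "\<And>d. d < n \<Longrightarrow> \<not> Q d x" using not_less_Least[of _ "\<lambda>d. Q d x"] e by blast
    show "x \<in> {x. Q n x} \<inter> (UNIV - (\<Union>d\<in>{..<n}. {x. Q d x}))"
      using 1 2 by blast
  next
    fix x assume "x \<in> {x. Q n x} \<inter> (UNIV - (\<Union>d\<in>{..<n}. {x. Q d x}))"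
    hence 1: "Q n x" and 2: "\<And>d. d < n \<Longrightarrow> \<not> Q d x" by blast+
    have "(LEAST d::nat. Q d x) = n"
      using 1 2 by (metis (mono_tags, lifting) Least_equality not_less)
    thus "x \<in> {x. (LEAST d::nat. Q d x) = n}" by simp
  qed
  moreover have "{x. Q n x} \<inter> (UNIV - (\<Union>d\<in>{..<n}. {x. Q d x})) \<in> sets borel"
    using assms(1) by (intro sets.Int sets.Diff sets.countable_UN') auto
  ultimately show ?thesis by simp
qed

lemma finF_UN: "(\<And>h. A h \<in> sets borel) \<Longrightarrow> (\<Union>h\<in>F. A h) \<in> sets borel"
  using finF by (intro sets.countable_UN') (auto intro: countable_finite)

lemma kap_level: "{x. kap x = n} \<in> sets borel"
proof -
  have eq: "\<And>d. {x. x \<in> B d \<and> (\<forall>h\<in>F. a h x \<notin> B d)} = B d \<inter> (UNIV - (\<Union>h\<in>F. a h -` B d))"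
    by auto
  have "\<And>d. B d \<inter> (UNIV - (\<Union>h\<in>F. a h -` B d)) \<in> sets borel"
    using B_open by (intro sets.Int sets.Diff finF_UN a_pre) auto
  hence 1: "\<And>d. {x. x \<in> B d \<and> (\<forall>h\<in>F. a h x \<notin> B d)} \<in> sets borel" using eq by metis
  show ?thesis unfolding kap_def by (rule Least_level[OF 1 kap_ex])
qed

lemma J_borel: "J n \<in> sets borel"
proof (induction n)
  case 0 thus ?case by simp
next
  case (Suc n)
  have "J (Suc n) = J n \<union> ({x. kap x = n} \<inter> (UNIV - (\<Union>h\<in>F. a h -` J n)))" by auto
  thus ?case using Suc kap_level by (auto intro!: sets.Un sets.Int sets.Diff finF_UN a_pre)
qed

lemma I_borel: "I \<in> sets borel" unfolding I_def using J_borel by auto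

lemma M_borel[measurable]: "M \<in> sets borel"
proof -
  have "M = I \<union> a t -` I" by (auto simp: M_def)
  thus ?thesis using I_borel a_pre by auto
qed

lemma a_tt: "a t (a t y) = y" using a_comp[of True 0 True 0 y] a_one by simp

lemma M_t: "a t y \<in> M \<longleftrightarrow> y \<in> M"
  using a_tt by (auto simp: M_def)

lemma M_sheet: "a h x \<in> M \<Longrightarrow> snd h' = snd h \<Longrightarrow> a h' x \<in> M"
proof -
  assume "a h x \<in> M" "snd h' = snd h"
  then show "a h' x \<in> M"
  proof (cases "fst h' = fst h")
    case True hence "h' = h" using \<open>snd h' = snd h\<close> by (simp add: prod_eq_iff)
    thus ?thesis using \<open>a h x \<in> M\<close> by simp
  next
    case False
    have "a h' x = a t (a h x)" using False \<open>snd h' = snd h\<close>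
      by (cases h; cases h') (simp add: a_comp)
    thus ?thesis using M_t \<open>a h x \<in> M\<close> by simp
  qed
qed

lemma M_I: "y \<in> M \<Longrightarrow> \<exists>s. a (s,0) y \<in> I"
  using a_one[of y] by (metis M_def UnE mem_Collect_eq)

lemma M_sep: "y \<in> M \<Longrightarrow> a (s,z) y \<in> M \<Longrightarrow> 0 < \<bar>z\<bar> \<Longrightarrow> \<bar>z\<bar> < W \<Longrightarrow> False"
proof -
  assume y: "y \<in> M" and hy: "a (s,z) y \<in> M" and z: "0 < \<bar>z\<bar>" "\<bar>z\<bar> < W"
  obtain s0 where s0: "a (s0,0) y \<in> I" using M_I[OF y] by blast
  have "y = a (s0,0) (a (s0,0) y)" by (simp add: a_comp a_one)
  hence "a (s,z) y = a (s \<noteq> s0, z) (a (s0,0) y)" by (metis a_comp add.right_neutral)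
  hence "a (s \<noteq> s0, z) (a (s0,0) y) \<in> M" using hy by simp
  then obtain s1 where "a (s1,0) (a (s \<noteq> s0, z) (a (s0,0) y)) \<in> I" using M_I by blast
  hence "a (s1 \<noteq> (s \<noteq> s0), z) (a (s0,0) y) \<in> I" by (cases s; cases s0; cases s1) (simp_all add: a_comp)
  moreover have "(s1 \<noteq> (s \<noteq> s0), z) \<in> F" using z by (simp add: F_def)
  ultimately show False using I_indep s0 by blast
qed

lemma M_off: "a (s,c) x \<in> M \<Longrightarrow> a (s',c') x \<in> M \<Longrightarrow> \<bar>c - c'\<bar> < W \<Longrightarrow> c = c'"
proof (rule ccontr)
  assume 1: "a (s,c) x \<in> M" and 2: "a (s',c') x \<in> M" and 3: "\<bar>c - c'\<bar> < W" and ne: "c \<noteq> c'"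
  have "a (s',c') x = a (s' \<noteq> s, c' - c) (a (s,c) x)"
    by (cases s; cases s') (simp_all add: a_comp)
  thus False using M_sep[OF 1, of "s' \<noteq> s" "c' - c"] 2 3 ne by (simp add: abs_minus_commute)
qed

lemma W_pos: "W > 0"
proof -
  have "(\<Sum>q\<in>P. 2 * npos q) \<ge> 0" by (rule sum_nonneg) (auto simp: P_def npos_def)
  thus ?thesis by (simp add: W_def)
qed

lemma M_near: "\<exists>h. a h x \<in> M \<and> \<bar>snd h - z0\<bar> < W"
proof -
  let ?y = "a (False, z0) x"
  have W1: "W > 0" by (rule W_pos)
  from I_max[of ?y] show ?thesis
  proof
    assume "?y \<in> I" thus ?thesis using W1 by (intro exI[of _ "(False,z0)"]) (auto simp: M_def)
  next
    assume "\<exists>h\<in>F. a h ?y \<in> I"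
    then obtain h where h: "h \<in> F" "a h ?y \<in> I" by blast
    have "a h ?y = a (gmul h (False, z0)) x" by (simp add: a_mul)
    thus ?thesis using h by (intro exI[of _ "gmul h (False, z0)"]) (cases h, auto simp: M_def F_def)
  qed
qed


lemma finP: "finite P"
proof -
  have "P \<subseteq> Sigma (set_mset S) (\<lambda>g. {..<count S g})" using count_greater_zero_iff by (fastforce simp: P_def)
  thus ?thesis by (rule finite_subset) auto
qed

lemma idx_bij: "bij_betw idx P {0..<kP}"
  unfolding idx_def kP_def by (rule someI_ex[OF ex_bij_betw_finite_nat[OF finP]])

lemma idx_lt: "p \<in> P \<Longrightarrow> idx p < kP" using idx_bij by (auto simp: bij_betw_def)
lemma idx_inj: "p \<in> P \<Longrightarrow> q \<in> P \<Longrightarrow> idx p = idx q \<Longrightarrow> p = q"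
  using idx_bij by (auto simp: bij_betw_def inj_on_def)
lemma npos_pos: "p \<in> P \<Longrightarrow> npos p > 0" by (auto simp: P_def npos_def)

lemma base_nonneg: "0 \<le> base p"
  unfolding base_def by (intro sum_nonneg) (auto simp: P_def npos_def)

lemma base_ins: "p \<in> P \<Longrightarrow> base p + 2 * npos p = (\<Sum>r\<in>insert p {r\<in>P. idx r < idx p}. 2 * npos r)"
  using finP by (simp add: base_def sum.insert add.commute)

lemma base_le: "p \<in> P \<Longrightarrow> q \<in> P \<Longrightarrow> idx p < idx q \<Longrightarrow> base p + 2 * npos p \<le> base q"
proof -
  assume p: "p \<in> P" and q: "q \<in> P" and lt: "idx p < idx q"
  have "base p + 2 * npos p = (\<Sum>r\<in>insert p {r\<in>P. idx r < idx p}. 2 * npos r)" using base_ins p .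
  also have "\<dots> \<le> (\<Sum>r\<in>{r\<in>P. idx r < idx q}. 2 * npos r)"
    using p lt finP by (intro sum_mono2) (auto simp: P_def npos_def)
  finally show ?thesis by (simp add: base_def)
qed

lemma base_bound: "p \<in> P \<Longrightarrow> base p + 2 * npos p < W"
proof -
  assume p: "p \<in> P"
  have "base p + 2 * npos p = (\<Sum>r\<in>insert p {r\<in>P. idx r < idx p}. 2 * npos r)" using base_ins p .
  also have "\<dots> \<le> (\<Sum>r\<in>P. 2 * npos r)"
    using p finP by (intro sum_mono2) (auto simp: P_def npos_def)
  finally show ?thesis by (simp add: W_def)
qed

lemma block_disj: "p \<in> P \<Longrightarrow> q \<in> P \<Longrightarrow> base p \<le> c \<Longrightarrow> c < base p + 2*npos p
   \<Longrightarrow> base q \<le> c \<Longrightarrow> c < base q + 2*npos q \<Longrightarrow> p = q"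
proof -
  assume a1: "p \<in> P" "q \<in> P" "base p \<le> c" "c < base p + 2*npos p" "base q \<le> c" "c < base q + 2*npos q"
  consider "idx p < idx q" | "idx q < idx p" | "idx p = idx q" by linarith
  thus "p = q"
  proof cases
    case 1 thus ?thesis using base_le[of p q] a1 by linarith
  next
    case 2 thus ?thesis using base_le[of q p] a1 by linarith
  next
    case 3 thus ?thesis using idx_inj a1 by blast
  qed
qed

definition D where "D p = {x. \<exists>r. 0 \<le> r \<and> r < npos p \<and> a (False, -(base p + r)) x \<in> M}"

lemma D_borel[measurable]: "D p \<in> sets borel"
proof -
  have "D p = (\<Union>r\<in>{0..<npos p}. a (False, -(base p + r)) -` M)" by (auto simp: D_def)
  thus ?thesis using a_pre[OF M_borel] by (auto intro!: sets.countable_UN' countable_finite)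
qed

lemma D_t: "a t x \<in> D p \<longleftrightarrow> x \<in> D p"
proof -
  have "\<And>u. a u (a t x) = a t (a u x)" by (rule a_comm)
  thus ?thesis unfolding D_def using M_t by simp
qed

lemma D_iff: "x \<in> D p \<longleftrightarrow> (\<exists>c. base p \<le> c \<and> c < base p + npos p \<and> a (False, -c) x \<in> M)"
proof
  assume "x \<in> D p"
  then obtain r where "0 \<le> r" "r < npos p" "a (False, -(base p + r)) x \<in> M" by (auto simp: D_def)
  thus "\<exists>c. base p \<le> c \<and> c < base p + npos p \<and> a (False, -c) x \<in> M"
    by (intro exI[of _ "base p + r"]) auto
next
  assume "\<exists>c. base p \<le> c \<and> c < base p + npos p \<and> a (False, -c) x \<in> M"
  then obtain c where "base p \<le> c" "c < base p + npos p" "a (False, -c) x \<in> M" by blast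
  thus "x \<in> D p" unfolding D_def by (intro CollectI exI[of _ "c - base p"]) auto
qed

lemma shiftM: "a (False, u) (a (ginv g) x) \<in> M \<longleftrightarrow> a (False, u - snd g) x \<in> M"
proof -
  obtain s z where g: "g = (s,z)" by (cases g)
  have e: "a (False, u) (a (ginv g) x) = a (s, u - z) x" using g by (simp add: a_comp)
  show ?thesis unfolding e using M_sheet[of "(s, u - z)" x "(False, u - z)"] M_sheet[of "(False, u - z)" x "(s, u - z)"] g
    by auto
qed

lemma Dback_iff: "a (ginv (fst p)) x \<in> D p \<longleftrightarrow>
   (\<exists>c. base p + npos p \<le> c \<and> c < base p + 2*npos p \<and> a (False, -c) x \<in> M)"
proof
  assume "a (ginv (fst p)) x \<in> D p"
  then obtain r where r: "0 \<le> r" "r < npos p" "a (False, -(base p + r)) (a (ginv (fst p)) x) \<in> M"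
    by (auto simp: D_def)
  hence "a (False, -(base p + r + npos p)) x \<in> M" using shiftM by (simp add: npos_def algebra_simps)
  thus "\<exists>c. base p + npos p \<le> c \<and> c < base p + 2*npos p \<and> a (False, -c) x \<in> M"
    using r by (intro exI[of _ "base p + r + npos p"]) auto
next
  assume "\<exists>c. base p + npos p \<le> c \<and> c < base p + 2*npos p \<and> a (False, -c) x \<in> M"
  then obtain c where c: "base p + npos p \<le> c" "c < base p + 2*npos p" "a (False, -c) x \<in> M" by blast
  hence "a (False, -(base p + (c - base p - npos p))) (a (ginv (fst p)) x) \<in> M"
    using shiftM by (simp add: npos_def algebra_simps)
  thus "a (ginv (fst p)) x \<in> D p" unfolding D_def using c by (intro CollectI exI[of _ "c - base p - npos p"]) auto
qed

lemma off_unique: "p \<in> P \<Longrightarrow> q \<in> P \<Longrightarrow> base p \<le> c \<Longrightarrow> c < base p + 2*npos p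
   \<Longrightarrow> base q \<le> c' \<Longrightarrow> c' < base q + 2*npos q \<Longrightarrow> a (False, -c) x \<in> M \<Longrightarrow> a (False, -c') x \<in> M
   \<Longrightarrow> p = q \<and> c = c'"
proof -
  assume a1: "p \<in> P" "q \<in> P" "base p \<le> c" "c < base p + 2*npos p" "base q \<le> c'" "c' < base q + 2*npos q"
    and m: "a (False, -c) x \<in> M" "a (False, -c') x \<in> M"
  have "\<bar>(-c) - (-c')\<bar> < W" using a1 base_nonneg[of p] base_nonneg[of q] base_bound[of p] base_bound[of q] by linarith
  hence "-c = -c'" using M_off[OF m] by blast
  hence "c = c'" by simp
  thus ?thesis using block_disj[of p q c] a1 by simp
qed

lemma def00: "p \<in> P \<Longrightarrow> q \<in> P \<Longrightarrow> x \<in> D p \<Longrightarrow> x \<in> D q \<Longrightarrow> p = q"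
proof -
  assume pq: "p \<in> P" "q \<in> P" and "x \<in> D p" "x \<in> D q"
  then obtain c c' where "base p \<le> c" "c < base p + npos p" "a (False, -c) x \<in> M"
     "base q \<le> c'" "c' < base q + npos q" "a (False, -c') x \<in> M" unfolding D_iff by blast
  thus ?thesis using off_unique[OF pq, of c c' x] npos_pos[OF pq(1)] npos_pos[OF pq(2)] by linarith
qed

lemma def11: "p \<in> P \<Longrightarrow> q \<in> P \<Longrightarrow> a (ginv (fst p)) x \<in> D p \<Longrightarrow> a (ginv (fst q)) x \<in> D q \<Longrightarrow> p = q"
proof -
  assume pq: "p \<in> P" "q \<in> P" and "a (ginv (fst p)) x \<in> D p" "a (ginv (fst q)) x \<in> D q"
  then obtain c c' where "base p + npos p \<le> c" "c < base p + 2*npos p" "a (False, -c) x \<in> M"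
     "base q + npos q \<le> c'" "c' < base q + 2*npos q" "a (False, -c') x \<in> M" unfolding Dback_iff by blast
  thus ?thesis using off_unique[OF pq, of c c' x] npos_pos[OF pq(1)] npos_pos[OF pq(2)] by linarith
qed

lemma def01: "p \<in> P \<Longrightarrow> q \<in> P \<Longrightarrow> x \<in> D p \<Longrightarrow> a (ginv (fst q)) x \<in> D q \<Longrightarrow> False"
proof -
  assume pq: "p \<in> P" "q \<in> P" and "x \<in> D p" "a (ginv (fst q)) x \<in> D q"
  then obtain c c' where c: "base p \<le> c" "c < base p + npos p" "a (False, -c) x \<in> M"
     "base q + npos q \<le> c'" "c' < base q + 2*npos q" "a (False, -c') x \<in> M"
    using D_iff[of x p] Dback_iff[of q x] by blast
  have "p = q \<and> c = c'" using off_unique[OF pq, of c c' x] c npos_pos[OF pq(1)] npos_pos[OF pq(2)] by linarith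
  thus False using c by simp
qed


lemma gp_m1: "gp g (-1) = ginv g" by (cases g) (simp add: gp_def ginv_def)

lemma gp_step: "a (gp g u) (a (ginv g) x) = a (gp g (u - 1)) x"
proof -
  obtain s z where g: "g = (s,z)" by (cases g)
  have "((s \<and> odd u) \<noteq> s) = (s \<and> odd (u - 1))" by (cases s) auto
  moreover have "u * z + - z = (u - 1) * z" by (simp add: algebra_simps)
  ultimately show ?thesis using g by (simp add: gp_def a_comp)
qed

definition dd where "dd p x = (LEAST d::nat. a (gp (fst p) (- int d - 1)) x \<in> D p)"

lemma dd_ex: "p \<in> P \<Longrightarrow> \<exists>d::nat. a (gp (fst p) (- int d - 1)) x \<in> D p"
proof -
  assume p: "p \<in> P"
  obtain e n i where pe: "p = ((e,n),i)" by (metis prod.collapse)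
  have n: "n = npos p" using pe by (simp add: npos_def)
  have n0: "n > 0" using npos_pos[OF p] n by simp
  obtain h where h: "a h x \<in> M" "\<bar>snd h - (-3*W)\<bar> < W" using M_near by blast
  define v where "v = - snd h - base p"
  define r where "r = v mod n"
  define Q where "Q = v div n"
  have vr: "v = n * Q + r" unfolding r_def Q_def by simp
  have r0: "0 \<le> r" "r < n" unfolding r_def using n0 by simp_all
  have bb: "base p + 2 * n < W" "0 \<le> base p" using base_bound[OF p] base_nonneg n by simp_all
  have "n * Q > 0" using vr r0 h(2) bb unfolding v_def by linarith
  hence Q1: "Q \<ge> 1" using n0 by (simp add: zero_less_mult_iff)
  define d where "d = nat (Q - 1)"
  have dQ: "- int d - 1 = - Q" using Q1 unfolding d_def by simp
  have "a (False, -(base p + r)) (a (gp (fst p) (- Q)) x) = a ((e \<and> odd Q) , snd h) x"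
  proof -
    have "n * Q = Q * n" by simp
    hence "- r - (Q * n + base p) = snd h" using vr unfolding v_def by linarith
    thus ?thesis using pe by (simp add: gp_def a_comp algebra_simps)
  qed
  hence "a (False, -(base p + r)) (a (gp (fst p) (- Q)) x) \<in> M" using M_sheet[OF h(1)] by simp
  hence "a (gp (fst p) (- Q)) x \<in> D p" unfolding D_def using r0 n by blast
  thus ?thesis using dQ by metis
qed

lemma dd_prop: "p \<in> P \<Longrightarrow> a (gp (fst p) (- int (dd p x) - 1)) x \<in> D p"
  unfolding dd_def by (rule LeastI_ex[OF dd_ex])

lemma dd_step: "p \<in> P \<Longrightarrow> a (ginv (fst p)) x \<notin> D p \<Longrightarrow> dd p x = Suc (dd p (a (ginv (fst p)) x))"
proof -
  assume p: "p \<in> P" and nd: "a (ginv (fst p)) x \<notin> D p"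
  let ?Pr = "\<lambda>d::nat. a (gp (fst p) (- int d - 1)) x \<in> D p"
  obtain n where "?Pr n" using dd_ex[OF p] by blast
  moreover have "\<not> ?Pr 0" using nd by (simp add: gp_m1)
  ultimately have "(LEAST d. ?Pr d) = Suc (LEAST m. ?Pr (Suc m))" by (rule Least_Suc)
  moreover have "\<And>m. ?Pr (Suc m) = (a (gp (fst p) (- int m - 1)) (a (ginv (fst p)) x) \<in> D p)"
    by (simp add: gp_step algebra_simps)
  ultimately show ?thesis unfolding dd_def by simp
qed

lemma dd_t: "dd p (a t x) = dd p x"
proof -
  have "\<And>u. a u (a t x) = a t (a u x)" by (rule a_comm)
  thus ?thesis unfolding dd_def using D_t by simp
qed


lemma ginv_ginv[simp]: "ginv (ginv g) = g" by (cases g) simp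

definition posc where
  "posc x p = (if x \<in> D p then 2*kP else 2 * idx p + (if even (dd p x) then 0 else 1))"

definition col0 where
  "col0 x h i = (if h = t then 2*kP + i else if 0 < snd h then posc x (h,i) else posc (a h x) (ginv h, i))"

lemma HS_cases: "(h,j) \<in> HS \<Longrightarrow> h = t \<or> (0 < snd h \<and> (h,j) \<in> P) \<or> (snd h < 0 \<and> (ginv h, j) \<in> P)"
proof -
  assume hj: "(h,j) \<in> HS"
  obtain s z where h: "h = (s,z)" by (cases h)
  have c: "count S (ginv h) = count S h" using symS unfolding symmetric_mset_def by metis
  have hz: "\<not> s \<Longrightarrow> z \<noteq> 0" using hj nog h by (auto simp: HS_def gone_def not_in_iff)
  show ?thesis
  proof (cases s)
    case True thus ?thesis using hj c h by (cases "z = 0") (auto simp: HS_def P_def linorder_neq_iff)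
  next
    case False thus ?thesis using hj c h hz by (auto simp: HS_def P_def linorder_neq_iff)
  qed
qed

lemma posc_le: "p \<in> P \<Longrightarrow> posc x p \<le> 2*kP"
  using idx_lt[of p] by (auto simp: posc_def)

lemma posc_D: "p \<in> P \<Longrightarrow> posc x p = 2*kP \<longleftrightarrow> x \<in> D p"
  using idx_lt[of p] by (auto simp: posc_def)

lemma posc_nD: "x \<notin> D p \<Longrightarrow> posc x p div 2 = idx p \<and> (posc x p mod 2 = 0 \<longleftrightarrow> even (dd p x))"
  by (auto simp: posc_def)

abbreviation yy where "yy x \<rho> p \<equiv> (if \<rho> then a (ginv (fst p)) x else x)"

lemma half_rep: "(h,j) \<in> HS \<Longrightarrow> h \<noteq> t \<Longrightarrow> \<exists>p\<in>P. \<exists>\<rho>. col0 x h j = posc (yy x \<rho> p) p \<and>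
    (h,j) = (if \<rho> then (ginv (fst p), snd p) else p)"
proof -
  assume hj: "(h,j) \<in> HS" and ht: "h \<noteq> t"
  from HS_cases[OF hj] ht consider "0 < snd h" "(h,j) \<in> P" | "snd h < 0" "(ginv h, j) \<in> P" by blast
  thus ?thesis
  proof cases
    case 1 thus ?thesis using ht by (intro bexI[of _ "(h,j)"] exI[of _ False]) (auto simp: col0_def)
  next
    case 2 thus ?thesis using ht by (intro bexI[of _ "(ginv h,j)"] exI[of _ True]) (auto simp: col0_def)
  qed
qed

lemma core_inj: "p \<in> P \<Longrightarrow> q \<in> P \<Longrightarrow> posc (yy x \<rho> p) p = posc (yy x \<sigma> q) q \<Longrightarrow> p = q \<and> \<rho> = \<sigma>"
proof -
  assume p: "p \<in> P" and q: "q \<in> P" and eq: "posc (yy x \<rho> p) p = posc (yy x \<sigma> q) q"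
  show ?thesis
  proof (cases "yy x \<rho> p \<in> D p")
    case True
    have "posc (yy x \<rho> p) p = 2*kP" using posc_D[OF p] True by blast
    hence "posc (yy x \<sigma> q) q = 2*kP" using eq by metis
    hence T2: "yy x \<sigma> q \<in> D q" using posc_D[OF q] by blast
    show ?thesis
    proof (cases \<rho>; cases \<sigma>)
      assume "\<rho>" "\<sigma>" thus ?thesis using def11[OF p q] True T2 by simp
    next
      assume "\<rho>" "\<not>\<sigma>" thus ?thesis using def01[OF q p] True T2 by simp
    next
      assume "\<not>\<rho>" "\<sigma>" thus ?thesis using def01[OF p q] True T2 by simp
    next
      assume "\<not>\<rho>" "\<not>\<sigma>" thus ?thesis using def00[OF p q] True T2 by simp
    qed
  next
    case False
    have "posc (yy x \<rho> p) p \<noteq> 2*kP" using posc_D[OF p] False by blast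
    hence "posc (yy x \<sigma> q) q \<noteq> 2*kP" using eq by metis
    hence F2: "yy x \<sigma> q \<notin> D q" using posc_D[OF q] by blast
    have "idx p = idx q" using posc_nD[OF False] posc_nD[OF F2] eq by simp
    hence pq: "p = q" using idx_inj p q by blast
    have "\<rho> = \<sigma>"
    proof (rule ccontr)
      assume ne: "\<rho> \<noteq> \<sigma>"
      { fix \<alpha> \<beta> assume "\<not>\<alpha>" "\<beta>" "posc (yy x \<alpha> p) p = posc (yy x \<beta> p) p" "yy x \<beta> p \<notin> D p" "yy x \<alpha> p \<notin> D p"
        hence "posc x p = posc (a (ginv (fst p)) x) p" "a (ginv (fst p)) x \<notin> D p" "x \<notin> D p" by auto
        moreover have "dd p x = Suc (dd p (a (ginv (fst p)) x))" using dd_step[OF p] calculation by blast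
        ultimately have False using posc_nD[of x p] posc_nD[of "a (ginv (fst p)) x" p] by auto }
      thus False using ne eq pq False F2 by (cases \<rho>) auto
    qed
    thus ?thesis using pq by simp
  qed
qed

lemma col0_inj: "(h,j) \<in> HS - {(t,0)} \<Longrightarrow> (h',j') \<in> HS - {(t,0)} \<Longrightarrow> col0 x h j = col0 x h' j' \<Longrightarrow> (h,j) = (h',j')"
proof -
  assume hj: "(h,j) \<in> HS - {(t,0)}" and hj': "(h',j') \<in> HS - {(t,0)}" and eq: "col0 x h j = col0 x h' j'"
  show ?thesis
  proof (cases "h = t"; cases "h' = t")
    assume "h = t" "h' = t" thus ?thesis using eq by (simp add: col0_def)
  next
    assume a1: "h = t" "h' \<noteq> t"
    then obtain q \<sigma> where "q \<in> P" "col0 x h' j' = posc (yy x \<sigma> q) q" using half_rep[of h' j' x] hj' by blast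
    hence "col0 x h' j' \<le> 2*kP" using posc_le by simp
    moreover have "j \<noteq> 0" using hj a1 by auto
    ultimately show ?thesis using eq a1 by (simp add: col0_def)
  next
    assume a1: "h' = t" "h \<noteq> t"
    then obtain q \<sigma> where "q \<in> P" "col0 x h j = posc (yy x \<sigma> q) q" using half_rep[of h j x] hj by blast
    hence "col0 x h j \<le> 2*kP" using posc_le by simp
    moreover have "j' \<noteq> 0" using hj' a1 by auto
    ultimately show ?thesis using eq a1 by (simp add: col0_def)
  next
    assume a1: "h \<noteq> t" "h' \<noteq> t"
    obtain p \<rho> where p: "p \<in> P" "col0 x h j = posc (yy x \<rho> p) p" "(h,j) = (if \<rho> then (ginv (fst p), snd p) else p)"
      using half_rep[of h j x] hj a1 by blast
    obtain q \<sigma> where q: "q \<in> P" "col0 x h' j' = posc (yy x \<sigma> q) q" "(h',j') = (if \<sigma> then (ginv (fst q), snd q) else q)"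
      using half_rep[of h' j' x] hj' a1 by blast
    have "posc (yy x \<rho> p) p = posc (yy x \<sigma> q) q" using p(2) q(2) eq by metis
    hence "p = q \<and> \<rho> = \<sigma>" by (rule core_inj[OF p(1) q(1)])
    thus ?thesis using p(3) q(3) by simp
  qed
qed


lemma finHS: "finite HS"
proof -
  have "HS \<subseteq> Sigma (set_mset S) (\<lambda>g. {..<count S g})" using count_greater_zero_iff by (fastforce simp: HS_def)
  thus ?thesis by (rule finite_subset) auto
qed

lemma card_HS: "card HS = size S" unfolding HS_def by (rule size_HS)

lemma mt_pos: "mt > 0" using tin by (simp add: mt_def)

lemma size_ge: "2*kP + mt \<le> size S"
proof -
  let ?A = "{t} \<times> {..<mt}"
  let ?N = "(\<lambda>(g,i). (ginv g, i)) ` P"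
  have c: "\<And>g. count S (ginv g) = count S g" using symS unfolding symmetric_mset_def by metis
  have sub: "?A \<union> P \<union> ?N \<subseteq> HS" using c by (auto simp: HS_def P_def mt_def)
  have injN: "inj_on (\<lambda>(g,i). (ginv g, i)) P" by (auto simp: inj_on_def)
  have cN: "card ?N = kP" using card_image[OF injN] by (simp add: kP_def)
  have d1: "?A \<inter> P = {}" by (auto simp: P_def)
  have d2: "(?A \<union> P) \<inter> ?N = {}" by (auto simp: P_def)
  have "card (?A \<union> P \<union> ?N) = mt + kP + kP"
    using finP d1 d2 cN by (simp add: card_Un_disjoint card_cartesian_product kP_def)
  moreover have "card (?A \<union> P \<union> ?N) \<le> card HS" using card_mono[OF finHS sub] .
  ultimately show ?thesis using card_HS by simp
qed

lemma col0_lt: "(h,j) \<in> HS \<Longrightarrow> col0 x h j < size S"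
proof (cases "h = t")
  case True
  assume "(h,j) \<in> HS"
  thus ?thesis using True size_ge by (simp add: col0_def HS_def mt_def)
next
  case False
  assume hj: "(h,j) \<in> HS"
  obtain q \<sigma> where "q \<in> P" "col0 x h j = posc (yy x \<sigma> q) q" using half_rep[OF hj False] by blast
  hence "col0 x h j \<le> 2*kP" using posc_le by simp
  thus ?thesis using size_ge mt_pos by simp
qed

definition miss where "miss x = (LEAST c. c \<notin> (\<lambda>(h,j). col0 x h j) ` (HS - {(t,0)}))"

lemma miss_ex: "\<exists>c<size S. c \<notin> (\<lambda>(h,j). col0 x h j) ` (HS - {(t,0)})"
proof (rule ccontr)
  assume "\<not> ?thesis"
  hence sub: "{..<size S} \<subseteq> (\<lambda>(h,j). col0 x h j) ` (HS - {(t,0)})" by auto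
  have t0: "(t,0) \<in> HS" using mt_pos by (simp add: HS_def mt_def)
  have "size S = card {..<size S}" by simp
  also have "\<dots> \<le> card ((\<lambda>(h,j). col0 x h j) ` (HS - {(t,0)}))" using finHS by (intro card_mono sub) auto
  also have "\<dots> \<le> card (HS - {(t,0)})" using finHS by (intro card_image_le) auto
  also have "\<dots> = size S - 1" using t0 finHS card_HS by simp
  finally show False using t0 card_HS finHS card_gt_0_iff[of HS] by auto
qed

lemma miss_prop: "miss x < size S \<and> miss x \<notin> (\<lambda>(h,j). col0 x h j) ` (HS - {(t,0)})"
proof -
  obtain c where c: "c < size S" "c \<notin> (\<lambda>(h,j). col0 x h j) ` (HS - {(t,0)})" using miss_ex by blast
  have "miss x \<le> c" unfolding miss_def by (rule Least_le) (rule c(2))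
  moreover have "miss x \<notin> (\<lambda>(h,j). col0 x h j) ` (HS - {(t,0)})" unfolding miss_def by (rule LeastI) (rule c(2))
  ultimately show ?thesis using c by simp
qed

lemma col0_t: "(h,j) \<in> HS \<Longrightarrow> col0 (a t x) h j = col0 x h j"
proof -
  have "\<And>u. a u (a t x) = a t (a u x)" by (rule a_comm)
  thus ?thesis by (simp add: col0_def posc_def D_t dd_t)
qed

lemma miss_t: "miss (a t x) = miss x"
proof -
  have "(\<lambda>(h,j). col0 (a t x) h j) ` (HS - {(t,0)}) = (\<lambda>(h,j). col0 x h j) ` (HS - {(t,0)})"
    using col0_t by (intro image_cong) auto
  thus ?thesis by (simp add: miss_def)
qed

lemma col0_edge: "(h,j) \<in> HS \<Longrightarrow> h \<noteq> t \<Longrightarrow> col0 (a h x) (ginv h) j = col0 x h j"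
proof -
  assume hj: "(h,j) \<in> HS" and ht: "h \<noteq> t"
  have gt: "ginv h \<noteq> t" using ht by (metis ginv_ginv ginv_pair neg_0_equal_iff_equal)
  from HS_cases[OF hj] ht consider "0 < snd h" | "snd h < 0" by blast
  thus ?thesis
  proof cases
    case 1
    hence "\<not> 0 < snd (ginv h)" by (cases h) simp
    thus ?thesis using 1 ht gt a_inv[of h x] by (simp add: col0_def)
  next
    case 2
    hence "0 < snd (ginv h)" by (cases h) simp
    thus ?thesis using 2 ht gt by (simp add: col0_def)
  qed
qed

definition col where "col x h i = (if h = t \<and> i = 0 then miss x else col0 x h i)"


lemma a_pre': "A \<in> sets borel \<Longrightarrow> {x. a g x \<in> A} \<in> sets borel"
  using a_pre[of A g] by (simp add: vimage_def)

lemma meas_nat: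
  fixes f :: "'x \<Rightarrow> nat"
  assumes "\<And>c. {x. f x = c} \<in> sets borel"
  shows "f \<in> measurable borel (count_space UNIV)"
  unfolding measurable_count_space_eq2_countable using assms by (simp add: vimage_def)

lemma const_level: "{x::'x. (c::nat) = d} \<in> sets borel"
  by (cases "c = d") simp_all

lemma comp_level:
  fixes f :: "'x \<Rightarrow> nat"
  assumes "\<And>n. {x. f x = n} \<in> sets borel"
  shows "{x. G (f x) = c} \<in> sets borel"
proof -
  have "{x. G (f x) = c} = (\<Union>n\<in>{n. G n = c}. {x. f x = n})" by auto
  thus ?thesis using assms by (auto intro!: sets.countable_UN' countableI_type)
qed

lemma dd_level: "p \<in> P \<Longrightarrow> {x. dd p x = n} \<in> sets borel"
  unfolding dd_def by (rule Least_level) (auto intro: a_pre' dd_ex)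

lemma posc_level: "p \<in> P \<Longrightarrow> {x. posc x p = c} \<in> sets borel"
proof -
  assume p: "p \<in> P"
  have "{x. posc x p = c} = (D p \<inter> {x. 2*kP = c}) \<union>
      ((UNIV - D p) \<inter> {x. (\<lambda>n. 2 * idx p + (if even n then 0 else 1)) (dd p x) = c})"
    by (auto simp: posc_def)
  moreover have "{x. (\<lambda>n. 2 * idx p + (if even n then 0 else 1)) (dd p x) = c} \<in> sets borel"
    by (rule comp_level) (rule dd_level[OF p])
  ultimately show ?thesis using const_level by (auto intro!: sets.Un sets.Int sets.Diff)
qed

lemma col0_level: "(h,j) \<in> HS \<Longrightarrow> {x. col0 x h j = c} \<in> sets borel"
proof -
  assume hj: "(h,j) \<in> HS"
  from HS_cases[OF hj] consider "h = t" | "h \<noteq> t" "0 < snd h" "(h,j) \<in> P" | "h \<noteq> t" "snd h < 0" "(ginv h, j) \<in> P"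
    by blast
  thus ?thesis
  proof cases
    case 1 thus ?thesis using const_level by (simp add: col0_def)
  next
    case 2 thus ?thesis using posc_level by (simp add: col0_def)
  next
    case 3
    hence e: "{x. col0 x h j = c} = {x. a h x \<in> {y. posc y (ginv h, j) = c}}" by (auto simp: col0_def)
    show ?thesis unfolding e by (rule a_pre'[OF posc_level[OF 3(3)]])
  qed
qed

lemma miss_level: "{x. miss x = c} \<in> sets borel"
  unfolding miss_def
proof (rule Least_level)
  fix d
  have "{x. d \<notin> (\<lambda>(h,j). col0 x h j) ` (HS - {(t,0)})} = UNIV - (\<Union>hj\<in>HS - {(t,0)}. {x. col0 x (fst hj) (snd hj) = d})"
    by auto
  moreover have "(\<Union>hj\<in>HS - {(t,0)}. {x. col0 x (fst hj) (snd hj) = d}) \<in> sets borel"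
    using finHS col0_level by (intro sets.countable_UN' countable_finite) auto
  ultimately show "{x. d \<notin> (\<lambda>(h,j). col0 x h j) ` (HS - {(t,0)})} \<in> sets borel" by simp
next
  fix x show "\<exists>d. d \<notin> (\<lambda>(h,j). col0 x h j) ` (HS - {(t,0)})" using miss_ex by blast
qed

lemma col_eq0: "(g,i) \<noteq> (t,0) \<Longrightarrow> col x g i = col0 x g i" by (auto simp: col_def)
lemma col_eqm: "col x t 0 = miss x" by (simp add: col_def)

lemma miss_ne: "(h,j) \<in> HS - {(t,0)} \<Longrightarrow> miss x \<noteq> col0 x h j"
proof
  assume hj: "(h,j) \<in> HS - {(t,0)}" and e: "miss x = col0 x h j"
  have "col0 x h j \<in> (\<lambda>(h,j). col0 x h j) ` (HS - {(t,0)})" using hj by (rule rev_image_eqI) simp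
  thus False using miss_prop[of x] e by simp
qed

lemma coloring: "borel_edge_coloring a S (size S) col"
  unfolding borel_edge_coloring_def
proof (intro conjI allI impI)
  fix x g i assume "i < count S g"
  hence gi: "(g,i) \<in> HS" by (simp add: HS_def)
  show "col x g i < size S"
  proof (cases "(g,i) = (t,0)")
    case True thus ?thesis using miss_prop[of x] col_eqm by simp
  next
    case False thus ?thesis using col0_lt[OF gi] col_eq0 by simp
  qed
  show "col (a g x) (ginv g) i = col x g i"
  proof (cases "g = t")
    case True
    show ?thesis
    proof (cases "i = 0")
      case True thus ?thesis using miss_t \<open>g = t\<close> col_eqm by simp
    next
      case False thus ?thesis using \<open>g = t\<close> col_eq0 by (simp add: col0_def)
    qed
  next
    case False
    hence "ginv g \<noteq> t" by (metis ginv_ginv ginv_pair neg_0_equal_iff_equal)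
    thus ?thesis using False col0_edge[OF gi False] col_eq0 by simp
  qed
  show "(\<lambda>x. col x g i) \<in> measurable borel (count_space UNIV)"
  proof (rule meas_nat)
    fix c show "{x. col x g i = c} \<in> sets borel"
    proof (cases "(g,i) = (t,0)")
      case True thus ?thesis using miss_level col_eqm by simp
    next
      case False thus ?thesis using col0_level[OF gi] col_eq0 by simp
    qed
  qed
next
  fix x g i h j assume "i < count S g" "j < count S h" "(g, i) \<noteq> (h, j)"
  hence gi: "(g,i) \<in> HS" and hj: "(h,j) \<in> HS" and ne: "(g, i) \<noteq> (h, j)" by (simp_all add: HS_def)
  show "col x g i \<noteq> col x h j"
  proof (cases "(g,i) = (t,0)")
    case True
    hence "(h,j) \<in> HS - {(t,0)}" using hj ne by auto
    thus ?thesis using True miss_ne[of h j x] col_eq0[of h j x] col_eqm by auto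
  next
    case False
    note F1 = False
    show ?thesis
    proof (cases "(h,j) = (t,0)")
      case True
      hence "(g,i) \<in> HS - {(t,0)}" using gi F1 by auto
      thus ?thesis using True miss_ne[of g i x] col_eq0[of g i x] col_eqm by auto
    next
      case False
      have "col0 x g i \<noteq> col0 x h j"
      proof
        assume "col0 x g i = col0 x h j"
        hence "(g,i) = (h,j)" using col0_inj[of g i h j x] gi hj F1 False by blast
        thus False using ne by simp
      qed
      thus ?thesis using col_eq0 F1 False by simp
    qed
  qed
qed

end

lemma lower:
  assumes "borel_edge_coloring a S k c"
  shows "size S \<le> k"
proof -
  let ?x = undefined
  let ?H = "{(h,j). j < count S h}"
  have dist: "\<And>g i h j. i < count S g \<Longrightarrow> j < count S h \<Longrightarrow> (g,i) \<noteq> (h,j) \<Longrightarrow> c ?x g i \<noteq> c ?x h j"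
    using assms unfolding borel_edge_coloring_def by blast
  have bnd: "\<And>g i. i < count S g \<Longrightarrow> c ?x g i < k"
    using assms unfolding borel_edge_coloring_def by blast
  have inj: "inj_on (\<lambda>(g,i). c ?x g i) ?H"
  proof (rule inj_onI)
    fix u v assume uv: "u \<in> ?H" "v \<in> ?H" "(\<lambda>(g,i). c ?x g i) u = (\<lambda>(g,i). c ?x g i) v"
    obtain g i where u: "u = (g,i)" by fastforce
    obtain h j where v: "v = (h,j)" by fastforce
    show "u = v" using dist[of i g j h] uv u v by auto
  qed
  have "(\<lambda>(g,i). c ?x g i) ` ?H \<subseteq> {..<k}" using bnd by auto
  hence "card ?H \<le> card {..<k}" using card_inj_on_le[OF inj] by blast
  thus ?thesis using size_HS[of S] by simp
qed

theorem lemma11: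
  fixes S :: "gam multiset" and a :: "gam \<Rightarrow> 'x::polish_space \<Rightarrow> 'x"
  assumes "symmetric_mset S"
    and "gone \<notin># S"
    and "gen_subgroup (set_mset S) = UNIV"
    and "borel_action a"
    and "free_action a"
    and "(True, 0) \<in># S"
  shows "borel_chromatic_index a S = enat (size S)"
proof -
  interpret L S a using assms by unfold_locales auto
  let ?K = "{k::nat. \<exists>c. borel_edge_coloring a S k c}"
  have mem: "size S \<in> ?K" using coloring by blast
  have "(INF k \<in> ?K. enat k) \<le> enat (size S)" using mem by (rule INF_lower)
  moreover have "enat (size S) \<le> (INF k \<in> ?K. enat k)" using lower by (auto intro!: INF_greatest)
  ultimately show ?thesis unfolding borel_chromatic_index_def by (rule antisym)
qed

end
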